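(* Let $L_0$ be the boundary value problem on the tree $G$ (with $m$ edges, vertex set $V$ and boundary conditions BC) with $\sigma_j\equiv0$ and $\gamma_j=0$ for all $j$, and let $\Delta_0(\lambda)$ be its characteristic function. Then, as $\rho=i\tau$, $\tau\to+\infty$, $$\Delta_0(\rho^2)=\tau^{1-d}\,2^{-m}\prod_{v\in V}|E_v|\,\exp(m\tau\pi)\,(1+o(1)),$$ where $d$ is the number of Dirichlet conditions among BC and $|E_v|$ is the degree of $v$.
   Context: Let $G$ be a finite tree with vertex set $V$ and edges $e_1,\dots,e_m$ ($m\ge1$), all of length $\pi$; $E_v$ is the set of edges incident to $v$. Vertices of degree $1$ are boundary vertices, the others internal. Each edge $e_j$ is parametrized by $x_j\in[0,\pi]$. For the zero-potential problem all quasi-derivatives are ordinary derivatives. The problem $L_0$: $-y_j''=\lambda y_j$ on $(0,\pi)$, $j=1,\dots,m$; at each internal vertex $v$, continuity $y_j(v)=y_k(v)$ ($e_j,e_k\in E_v$) and Kirchhoff's condition $\sum_{e_j\in E_v}y_j^{[1]}(v)=0$, where $y_j^{[1]}(v)=-y_j'(0)$ if $v$ corresponds to $x_j=0$ and $y_j^{[1]}(v)=y_j'(\pi)$ if $v$ corresponds to $x_j=\pi$; at each boundary vertex either Dirichlet $y(v)=0$ or Neumann $y^{[1]}(v)=0$ (a fixed choice BC). Let $C_j,S_j$ solve $-y''=\lambda y$ with $C_j(0)=S_j'(0)=1$, $C_j'(0)=S_j(0)=0$. The characteristic function is defined recursively: for $m=1$, it is $S_1(\pi,\lambda)$, $S_1'(\pi,\lambda)$,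 $C_1(\pi,\lambda)$, $C_1'(\pi,\lambda)$ for the conditions $y(0)=y(\pi)=0$, $y(0)=y'(\pi)=0$, $y'(0)=y(\pi)=0$, $y'(0)=y'(\pi)=0$ respectively; for $m>1$, choose an internal vertex $u$ of degree $s$, split $G$ at $u$ into subtrees $G_1,\dots,G_s$, let $\Delta_j^D,\Delta_j^N$ be characteristic functions of the analogous problems on $G_j$ with Dirichlet, resp. Neumann, condition at $u$ (other conditions unchanged), and set $\Delta=\sum_{j}\Delta_j^N\prod_{k\ne j}\Delta_k^D$. Here $\rho=\sqrt\lambda$, $\mathrm{Re}\,\rho\ge 0$. *)

theory Defs
  imports "HOL-Analysis.Analysis"
begin

text \<open>A tree is given by a finite set of oriented edges (a,b): the edge is parametrized
  by x in [0,pi], the vertex a corresponding to x = 0 and b to x = pi.\<close>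

definition verts :: "('v \<times> 'v) set \<Rightarrow> 'v set" where
  "verts E = fst ` E \<union> snd ` E"

definition incident :: "('v \<times> 'v) set \<Rightarrow> 'v \<Rightarrow> ('v \<times> 'v) set" where
  "incident E v = {e \<in> E. fst e = v \<or> snd e = v}"

definition degree :: "('v \<times> 'v) set \<Rightarrow> 'v \<Rightarrow> nat" where
  "degree E v = card (incident E v)"

definition adj :: "('v \<times> 'v) set \<Rightarrow> ('v \<times> 'v) set" where
  "adj E = E \<union> converse E"

definition is_tree :: "('v \<times> 'v) set \<Rightarrow> bool" where
  "is_tree E \<longleftrightarrow> finite E \<and> E \<noteq> {} \<and> (\<forall>(a,b)\<in>E. a \<noteq> b)
     \<and> (\<forall>x\<in>verts E. \<forall>y\<in>verts E. (x, y) \<in> (adj E)\<^sup>*)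
     \<and> card (verts E) = card E + 1"

text \<open>Solutions of -y'' = lambda y (zero potential):
  C(0)=1, C'(0)=0, S(0)=0, S'(0)=1, written in closed form.\<close>

definition S0 :: "complex \<Rightarrow> real \<Rightarrow> complex" where
  "S0 l x = (if l = 0 then of_real x else sin (csqrt l * of_real x) / csqrt l)"

definition S0' :: "complex \<Rightarrow> real \<Rightarrow> complex" where
  "S0' l x = cos (csqrt l * of_real x)"

definition C0 :: "complex \<Rightarrow> real \<Rightarrow> complex" where
  "C0 l x = cos (csqrt l * of_real x)"

definition C0' :: "complex \<Rightarrow> real \<Rightarrow> complex" where
  "C0' l x = - csqrt l * sin (csqrt l * of_real x)"

text \<open>Boundary conditions: dir v = True means Dirichlet at v, False means Neumann
  (only relevant at boundary vertices).
  char_fn E dir D: D is a characteristic function of the zero-potential problem L_0 on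
  the tree E with boundary conditions dir, obtained by the recursive definition
  (for any admissible choices of splitting vertices).\<close>

inductive char_fn :: "('v \<times> 'v) set \<Rightarrow> ('v \<Rightarrow> bool) \<Rightarrow> (complex \<Rightarrow> complex) \<Rightarrow> bool" where
  single: "a \<noteq> b \<Longrightarrow>
    char_fn {(a, b)} dir
      (\<lambda>l. if dir a then (if dir b then S0 l pi else S0' l pi)
                     else (if dir b then C0 l pi else C0' l pi))"
| split: "\<lbrakk> is_tree E; u \<in> verts E; degree E u \<ge> 2;
           \<forall>e\<in>incident E u. e \<in> T e \<and> T e \<subseteq> E \<and> is_tree (T e);
           (\<Union>e\<in>incident E u. T e) = E;
           \<forall>e\<in>incident E u. \<forall>f\<in>incident E u. e \<noteq> f \<longrightarrow> verts (T e) \<inter> verts (T f) = {u};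
           \<forall>e\<in>incident E u. char_fn (T e) (dir(u := True)) (DD e)
                              \<and> char_fn (T e) (dir(u := False)) (DN e) \<rbrakk>
   \<Longrightarrow> char_fn E dir
         (\<lambda>l. \<Sum>e\<in>incident E u. DN e l * (\<Prod>f\<in>incident E u - {e}. DD f l))"

end

theory Submission imports Defs "HOL-Real_Asymp.Real_Asymp" begin

definition Dset :: "('v \<times> 'v) set \<Rightarrow> ('v \<Rightarrow> bool) \<Rightarrow> 'v set" where
  "Dset E dir = {v \<in> verts E. degree E v = 1 \<and> dir v}"

definition Pd :: "('v \<times> 'v) set \<Rightarrow> real" where
  "Pd E = (\<Prod>v\<in>verts E. real (degree E v))"

lemma finite_verts: "finite E \<Longrightarrow> finite (verts E)"
  by (simp add: verts_def)

lemma Pd_pos: "finite E \<Longrightarrow> Pd E > 0"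
  unfolding Pd_def
proof (rule prod_pos)
  fix v assume "finite E" "v \<in> verts E"
  then obtain e where "e \<in> E" "fst e = v \<or> snd e = v" unfolding verts_def by auto
  then have "e \<in> incident E v" unfolding incident_def by auto
  moreover have "finite (incident E v)" using \<open>finite E\<close> unfolding incident_def by auto
  ultimately have "card (incident E v) > 0" using card_gt_0_iff by blast
  then show "0 < real (degree E v)" unfolding degree_def by simp
qed

definition F :: "('v \<times> 'v) set \<Rightarrow> ('v \<Rightarrow> bool) \<Rightarrow> real \<Rightarrow> real" where
  "F E dir \<tau> = Pd E * exp ((1 - real (card (Dset E dir))) * ln \<tau> + real (card E) * \<tau> * pi) / 2 ^ card E"

lemma F_pos: assumes "finite E" shows "F E dir \<tau> > 0"
  unfolding F_def using Pd_pos[OF assms] by simp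

lemma tree_irr: "is_tree E \<Longrightarrow> (a, b) \<in> E \<Longrightarrow> a \<noteq> b"
  unfolding is_tree_def by blast

locale splitting =
  fixes E :: "('v \<times> 'v) set" and u :: 'v and T :: "'v \<times> 'v \<Rightarrow> ('v \<times> 'v) set"
  assumes tree: "is_tree E" and uv: "u \<in> verts E" and deg2: "degree E u \<ge> 2"
    and Tp: "\<forall>e\<in>incident E u. e \<in> T e \<and> T e \<subseteq> E \<and> is_tree (T e)"
    and Tun: "(\<Union>e\<in>incident E u. T e) = E"
    and Tdisj: "\<forall>e\<in>incident E u. \<forall>f\<in>incident E u. e \<noteq> f \<longrightarrow> verts (T e) \<inter> verts (T f) = {u}"
begin

abbreviation "I \<equiv> incident E u"

lemma finE: "finite E" using tree unfolding is_tree_def by auto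
lemma finI: "finite I" using finE unfolding incident_def by auto
lemma cardI: "card I \<ge> 2" using deg2 unfolding degree_def by auto
lemma Tall: assumes "e \<in> I" shows "e \<in> T e \<and> T e \<subseteq> E \<and> is_tree (T e)"
  using Tp assms by (rule bspec)
lemma Te: "e \<in> I \<Longrightarrow> e \<in> T e" using Tall by (rule conjunct1)
lemma Tsub: "e \<in> I \<Longrightarrow> T e \<subseteq> E" using Tall by (rule conjunct1[OF conjunct2])
lemma finT: "e \<in> I \<Longrightarrow> finite (T e)" using Tsub finE by (rule finite_subset)
lemma IE: "I \<subseteq> E" unfolding incident_def by auto

lemma edisj: assumes "e \<in> I" "f \<in> I" "e \<noteq> f" shows "T e \<inter> T f = {}"
proof (rule ccontr)
  assume "T e \<inter> T f \<noteq> {}"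
  then obtain g where g: "g \<in> T e" "g \<in> T f" by auto
  then have "fst g \<in> verts (T e) \<inter> verts (T f)" "snd g \<in> verts (T e) \<inter> verts (T f)"
    unfolding verts_def by auto
  then have "fst g = u" "snd g = u" using Tdisj assms by auto
  moreover have "g \<in> E" using Tsub[OF assms(1)] g(1) by (rule subsetD)
  ultimately show False using tree_irr[OF tree, of "fst g" "snd g"] by (metis prod.collapse)
qed

lemma card_E: "card E = (\<Sum>e\<in>I. card (T e))"
proof -
  have "card E = card (\<Union>e\<in>I. T e)" using Tun by simp
  also have "\<dots> = (\<Sum>e\<in>I. card (T e))"
    by (rule card_UN_disjoint) (use finI finT edisj in auto)
  finally show ?thesis .
qed

lemma u_in: assumes "e \<in> I" shows "u \<in> verts (T e)"
proof -
  have "e \<in> T e" using Te[OF assms] .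
  moreover have "fst e = u \<or> snd e = u" using assms unfolding incident_def by simp
  ultimately show ?thesis unfolding verts_def by (metis UnI1 UnI2 image_eqI)
qed

lemma inc_other: assumes "e \<in> I" "w \<in> verts (T e)" "w \<noteq> u"
  shows "incident E w = incident (T e) w"
proof
  have "T e \<subseteq> E" using Tsub[OF assms(1)] .
  then show "incident (T e) w \<subseteq> incident E w" unfolding incident_def by auto
  show "incident E w \<subseteq> incident (T e) w"
  proof
    fix g assume g: "g \<in> incident E w"
    then have "g \<in> E" unfolding incident_def by auto
    then have "g \<in> (\<Union>e\<in>I. T e)" using Tun by simp
    then obtain f where f: "f \<in> I" "g \<in> T f" by blast
    then have "w \<in> verts (T f)" using g unfolding incident_def verts_def by force
    then have "f = e" using Tdisj assms f by blast
    then show "g \<in> incident (T e) w" using f g unfolding incident_def by auto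
  qed
qed

lemma deg_other: "e \<in> I \<Longrightarrow> w \<in> verts (T e) \<Longrightarrow> w \<noteq> u \<Longrightarrow> degree (T e) w = degree E w"
  using inc_other unfolding degree_def by simp

lemma inc_u: assumes "e \<in> I" shows "incident (T e) u = {e}"
proof
  have "e \<in> T e" using Te[OF assms] .
  then show "{e} \<subseteq> incident (T e) u" using assms unfolding incident_def by auto
  show "incident (T e) u \<subseteq> {e}"
  proof
    fix g assume g: "g \<in> incident (T e) u"
    have "T e \<subseteq> E" using Tsub[OF assms] .
    then have "g \<in> I" using g unfolding incident_def by auto
    then have "g \<in> T g" by (rule Te)
    show "g \<in> {e}"
    proof (rule ccontr)
      assume "g \<notin> {e}"
      then have "T e \<inter> T g = {}" using edisj assms \<open>g \<in> I\<close> by auto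
      then show False using g \<open>g \<in> T g\<close> unfolding incident_def by auto
    qed
  qed
qed

lemma deg_u: "e \<in> I \<Longrightarrow> degree (T e) u = 1"
  using inc_u unfolding degree_def by simp

lemma verts_E: "verts E = (\<Union>e\<in>I. verts (T e))"
proof -
  have "verts (\<Union>e\<in>I. T e) = (\<Union>e\<in>I. verts (T e))" unfolding verts_def by auto
  then show ?thesis using Tun by simp
qed

lemma Pd_T: assumes "e \<in> I" shows "Pd (T e) = (\<Prod>v\<in>verts (T e) - {u}. real (degree E v))"
proof -
  have "Pd (T e) = real (degree (T e) u) * (\<Prod>v\<in>verts (T e) - {u}. real (degree (T e) v))"
    unfolding Pd_def using prod.remove[OF finite_verts[OF finT[OF assms]] u_in[OF assms]] by simp
  also have "\<dots> = (\<Prod>v\<in>verts (T e) - {u}. real (degree E v))"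
    using deg_u[OF assms] deg_other[OF assms] by simp
  finally show ?thesis .
qed

lemma Pd_E: "Pd E = real (card I) * (\<Prod>e\<in>I. Pd (T e))"
proof -
  have fv: "finite (verts E)" using finite_verts finE by auto
  have "Pd E = real (degree E u) * (\<Prod>v\<in>verts E - {u}. real (degree E v))"
    unfolding Pd_def using prod.remove[OF fv uv] by simp
  also have "verts E - {u} = (\<Union>e\<in>I. verts (T e) - {u})" using verts_E by blast
  also have "(\<Prod>v\<in>(\<Union>e\<in>I. verts (T e) - {u}). real (degree E v))
      = (\<Prod>e\<in>I. \<Prod>v\<in>verts (T e) - {u}. real (degree E v))"
  proof (rule prod.UNION_disjoint)
    show "finite I" by (rule finI)
    show "\<forall>i\<in>I. finite (verts (T i) - {u})" using finT finite_verts by blast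
    show "\<forall>i\<in>I. \<forall>j\<in>I. i \<noteq> j \<longrightarrow> (verts (T i) - {u}) \<inter> (verts (T j) - {u}) = {}"
      using Tdisj by blast
  qed
  also have "\<dots> = (\<Prod>e\<in>I. Pd (T e))" using Pd_T by simp
  finally show ?thesis unfolding degree_def by simp
qed

lemma DsetF: "e \<in> I \<Longrightarrow> Dset (T e) (dir(u := False)) \<subseteq> verts (T e) - {u}"
  unfolding Dset_def by auto

lemma DsetT: assumes "e \<in> I"
  shows "card (Dset (T e) (dir(u := True))) = card (Dset (T e) (dir(u := False))) + 1"
proof -
  have "Dset (T e) (dir(u := True)) = insert u (Dset (T e) (dir(u := False)))"
    using deg_u[OF assms] u_in[OF assms] unfolding Dset_def by auto
  moreover have "finite (Dset (T e) (dir(u := False)))"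
    using finite_verts[OF finT[OF assms]] unfolding Dset_def by auto
  moreover have "u \<notin> Dset (T e) (dir(u := False))" unfolding Dset_def by auto
  ultimately show ?thesis by simp
qed

lemma DsetE: "card (Dset E dir) = (\<Sum>e\<in>I. card (Dset (T e) (dir(u := False))))"
proof -
  have "Dset E dir = (\<Union>e\<in>I. Dset (T e) (dir(u := False)))"
  proof
    show "Dset E dir \<subseteq> (\<Union>e\<in>I. Dset (T e) (dir(u := False)))"
    proof
      fix v assume v: "v \<in> Dset E dir"
      then have vu: "v \<noteq> u" using deg2 unfolding Dset_def by auto
      from v have "v \<in> verts E" unfolding Dset_def by simp
      then obtain e where e: "e \<in> I" "v \<in> verts (T e)" using verts_E by blast
      have "v \<in> Dset (T e) (dir(u := False))"
        using v vu e(2) deg_other[OF e vu] unfolding Dset_def by simp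
      then show "v \<in> (\<Union>e\<in>I. Dset (T e) (dir(u := False)))" using e(1) by (intro UN_I)
    qed
    show "(\<Union>e\<in>I. Dset (T e) (dir(u := False))) \<subseteq> Dset E dir"
    proof
      fix v assume "v \<in> (\<Union>e\<in>I. Dset (T e) (dir(u := False)))"
      then obtain e where e: "e \<in> I" "v \<in> Dset (T e) (dir(u := False))" by blast
      then have vu: "v \<noteq> u" and ve: "v \<in> verts (T e)" unfolding Dset_def by auto
      have "v \<in> verts E" using ve e(1) verts_E by blast
      then show "v \<in> Dset E dir" using e(2) vu deg_other[OF e(1) ve vu]
        unfolding Dset_def by simp
    qed
  qed
  also have "card \<dots> = (\<Sum>e\<in>I. card (Dset (T e) (dir(u := False))))"
  proof (rule card_UN_disjoint)
    show "finite I" by (rule finI)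
    show "\<forall>i\<in>I. finite (Dset (T i) (dir(u := False)))"
    proof
      fix i assume "i \<in> I"
      have "Dset (T i) (dir(u := False)) \<subseteq> verts (T i)" unfolding Dset_def by blast
      then show "finite (Dset (T i) (dir(u := False)))"
        using finite_verts[OF finT[OF \<open>i \<in> I\<close>]] finite_subset by blast
    qed
    show "\<forall>i\<in>I. \<forall>j\<in>I. i \<noteq> j \<longrightarrow> Dset (T i) (dir(u := False)) \<inter> Dset (T j) (dir(u := False)) = {}"
    proof (intro ballI impI)
      fix i j assume ij: "i \<in> I" "j \<in> I" "i \<noteq> j"
      have a: "Dset (T i) (dir(u := False)) \<subseteq> verts (T i) - {u}" using DsetF ij by blast
      have b: "Dset (T j) (dir(u := False)) \<subseteq> verts (T j) - {u}" using DsetF ij by blast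
      have c: "verts (T i) \<inter> verts (T j) = {u}" using Tdisj ij by blast
      show "Dset (T i) (dir(u := False)) \<inter> Dset (T j) (dir(u := False)) = {}"
        using a b c by blast
    qed
  qed
  finally show ?thesis .
qed


lemma F_identity:
  assumes e: "e \<in> I" and tau: "\<tau> > 0"
  shows "F (T e) (dir(u := False)) \<tau> * (\<Prod>f\<in>I - {e}. F (T f) (dir(u := True)) \<tau>)
         = F E dir \<tau> / real (card I)"
proof -
  define dN where "dN f = real (card (Dset (T f) (dir(u := False))))" for f
  define m where "m f = real (card (T f))" for f
  define X where "X f = - dN f * ln \<tau> + m f * \<tau> * pi" for f
  define G where "G f = Pd (T f) * exp (X f) / 2 ^ card (T f)" for f
  have FD: "F (T f) (dir(u := True)) \<tau> = G f" if "f \<in> I" for f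
    unfolding F_def G_def X_def dN_def m_def using DsetT[OF that, of dir] by (simp add: algebra_simps)
  have FN: "F (T e) (dir(u := False)) \<tau> = \<tau> * G e"
  proof -
    have "exp ((1 - dN e) * ln \<tau> + m e * \<tau> * pi) = exp (ln \<tau> + X e)"
      unfolding X_def by (simp add: algebra_simps)
    also have "\<dots> = \<tau> * exp (X e)" using tau by (simp add: exp_add)
    finally show ?thesis unfolding F_def G_def dN_def m_def by simp
  qed
  have "F (T e) (dir(u := False)) \<tau> * (\<Prod>f\<in>I - {e}. F (T f) (dir(u := True)) \<tau>)
      = \<tau> * (G e * (\<Prod>f\<in>I - {e}. G f))" using FD FN by simp
  also have "G e * (\<Prod>f\<in>I - {e}. G f) = (\<Prod>f\<in>I. G f)"
    using prod.remove[OF finI e, of G] by simp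
  also have "(\<Prod>f\<in>I. G f) = (\<Prod>f\<in>I. Pd (T f)) * exp (\<Sum>f\<in>I. X f) / 2 ^ (\<Sum>f\<in>I. card (T f))"
    unfolding G_def by (simp add: prod.distrib prod_dividef exp_sum[OF finI] power_sum)
  also have "(\<Sum>f\<in>I. X f) = - (\<Sum>f\<in>I. dN f) * ln \<tau> + (\<Sum>f\<in>I. m f) * \<tau> * pi"
    unfolding X_def by (simp add: sum.distrib sum_distrib_right sum_negf sum_subtractf)
  finally have L: "F (T e) (dir(u := False)) \<tau> * (\<Prod>f\<in>I - {e}. F (T f) (dir(u := True)) \<tau>)
     = \<tau> * ((\<Prod>f\<in>I. Pd (T f)) * exp (- (\<Sum>f\<in>I. dN f) * ln \<tau> + (\<Sum>f\<in>I. m f) * \<tau> * pi)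
         / 2 ^ (\<Sum>f\<in>I. card (T f)))" .
  have sd: "real (card (Dset E dir)) = (\<Sum>f\<in>I. dN f)" unfolding dN_def using DsetE[of dir] by simp
  have sm: "real (card E) = (\<Sum>f\<in>I. m f)" unfolding m_def using card_E by simp
  have "F E dir \<tau> = real (card I) * (\<Prod>f\<in>I. Pd (T f)) *
      exp (ln \<tau> + (- (\<Sum>f\<in>I. dN f) * ln \<tau> + (\<Sum>f\<in>I. m f) * \<tau> * pi)) / 2 ^ (\<Sum>f\<in>I. card (T f))"
    unfolding F_def Pd_E sd sm using card_E by (simp add: algebra_simps)
  also have "exp (ln \<tau> + (- (\<Sum>f\<in>I. dN f) * ln \<tau> + (\<Sum>f\<in>I. m f) * \<tau> * pi))
     = \<tau> * exp (- (\<Sum>f\<in>I. dN f) * ln \<tau> + (\<Sum>f\<in>I. m f) * \<tau> * pi)"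
    using tau by (simp add: exp_add)
  finally have R: "F E dir \<tau> = real (card I) * (\<Prod>f\<in>I. Pd (T f)) *
      (\<tau> * exp (- (\<Sum>f\<in>I. dN f) * ln \<tau> + (\<Sum>f\<in>I. m f) * \<tau> * pi)) / 2 ^ (\<Sum>f\<in>I. card (T f))" .
  have "card I \<noteq> 0" using cardI by simp
  then show ?thesis unfolding L R by (simp add: field_simps)
qed

end

lemma csqrt_sq: "\<tau> > 0 \<Longrightarrow> csqrt ((\<i> * complex_of_real \<tau>)\<^sup>2) = \<i> * complex_of_real \<tau>"
  by (rule csqrt_unique) auto

lemma sin_ix: "sin (\<i> * complex_of_real x) = \<i> * complex_of_real ((exp x - inverse (exp x)) / 2)"
  using sinh_real[of x] by simp

lemma cos_ix: "cos (\<i> * complex_of_real x) = complex_of_real ((exp x + inverse (exp x)) / 2)"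
  using cosh_real[of x] by simp

lemma single_F:
  assumes "a \<noteq> b"
  shows "F {(a, b)} dir \<tau> = exp ((1 - real (card {v \<in> {a, b}. dir v})) * ln \<tau> + \<tau> * pi) / 2"
proof -
  have v: "verts {(a, b)} = {a, b}" unfolding verts_def by auto
  have "incident {(a, b)} a = {(a, b)}" unfolding incident_def by auto
  then have da: "degree {(a, b)} a = 1" unfolding degree_def by simp
  have "incident {(a, b)} b = {(a, b)}" unfolding incident_def by auto
  then have db: "degree {(a, b)} b = 1" unfolding degree_def by simp
  have "Pd {(a, b)} = 1" unfolding Pd_def v using assms da db by simp
  moreover have "Dset {(a, b)} dir = {v \<in> {a, b}. dir v}" unfolding Dset_def v using da db by auto
  ultimately show ?thesis unfolding F_def by simp
qed

lemma main: "char_fn E dir D \<Longrightarrow> ((\<lambda>\<tau>. D ((\<i> * of_real \<tau>)\<^sup>2) / of_real (F E dir \<tau>)) \<longlongrightarrow> 1) at_top"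
proof (induction rule: char_fn.induct)
  case (single a b dir)
  define sh where "sh \<tau> = (exp (\<tau> * pi) - inverse (exp (\<tau> * pi))) / 2" for \<tau> :: real
  define ch where "ch \<tau> = (exp (\<tau> * pi) + inverse (exp (\<tau> * pi))) / 2" for \<tau> :: real
  define d where "d = card {v \<in> {a, b}. dir v}"
  define val where "val \<tau> = (if dir a then (if dir b then sh \<tau> / \<tau> else ch \<tau>)
                     else (if dir b then ch \<tau> else \<tau> * sh \<tau>))" for \<tau>
  have eq: "\<forall>\<^sub>F \<tau> in at_top.
     (if dir a then (if dir b then S0 ((\<i> * of_real \<tau>)\<^sup>2) pi else S0' ((\<i> * of_real \<tau>)\<^sup>2) pi)
                     else (if dir b then C0 ((\<i> * of_real \<tau>)\<^sup>2) pi else C0' ((\<i> * of_real \<tau>)\<^sup>2) pi))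
       / of_real (F {(a, b)} dir \<tau>)
     = of_real (val \<tau> / (exp ((1 - real d) * ln \<tau> + \<tau> * pi) / 2))"
    using eventually_gt_at_top[of 0]
  proof eventually_elim
    case (elim \<tau>)
    have l0: "(\<i> * complex_of_real \<tau>)\<^sup>2 \<noteq> 0" using elim by simp
    have arg: "csqrt ((\<i> * complex_of_real \<tau>)\<^sup>2) * complex_of_real pi = \<i> * complex_of_real (\<tau> * pi)"
      using csqrt_sq[OF elim] by simp
    have "S0 ((\<i> * of_real \<tau>)\<^sup>2) pi = sin (csqrt ((\<i> * of_real \<tau>)\<^sup>2) * of_real pi) / csqrt ((\<i> * of_real \<tau>)\<^sup>2)"
      unfolding S0_def using l0 by simp
    also have "\<dots> = sin (\<i> * of_real (\<tau> * pi)) / (\<i> * of_real \<tau>)"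
      by (subst arg, subst csqrt_sq[OF elim], rule refl)
    also have "\<dots> = \<i> * of_real (sh \<tau>) / (\<i> * of_real \<tau>)"
      unfolding sin_ix sh_def by simp
    also have "\<dots> = of_real (sh \<tau> / \<tau>)" by simp
    finally have S: "S0 ((\<i> * of_real \<tau>)\<^sup>2) pi = of_real (sh \<tau> / \<tau>)" .
    have S': "S0' ((\<i> * of_real \<tau>)\<^sup>2) pi = of_real (ch \<tau>)"
      unfolding S0'_def by (subst arg, unfold cos_ix ch_def, simp)
    have C: "C0 ((\<i> * of_real \<tau>)\<^sup>2) pi = of_real (ch \<tau>)"
      unfolding C0_def by (subst arg, unfold cos_ix ch_def, simp)
    have C': "C0' ((\<i> * of_real \<tau>)\<^sup>2) pi = of_real (\<tau> * sh \<tau>)"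
      unfolding C0'_def mult.assoc[symmetric]
      by (subst arg, subst csqrt_sq[OF elim], unfold sin_ix sh_def, simp add: algebra_simps)
    show ?case unfolding single_F[OF single] d_def[symmetric] val_def S S' C C'
      by (simp add: of_real_divide)
  qed
  have lim: "((\<lambda>\<tau>. val \<tau> / (exp ((1 - real d) * ln \<tau> + \<tau> * pi) / 2)) \<longlongrightarrow> 1) at_top"
  proof (cases "dir a"; cases "dir b")
    assume "dir a" "dir b"
    then have "{v \<in> {a, b}. dir v} = {a, b}" by auto
    then have "d = 2" unfolding d_def using single by simp
    then show ?thesis using \<open>dir a\<close> \<open>dir b\<close> unfolding val_def sh_def by simp real_asymp
  next
    assume "dir a" "\<not> dir b"
    then have "{v \<in> {a, b}. dir v} = {a}" by auto
    then have "d = 1" unfolding d_def by simp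
    then show ?thesis using \<open>dir a\<close> \<open>\<not> dir b\<close> unfolding val_def ch_def by simp real_asymp
  next
    assume "\<not> dir a" "dir b"
    then have "{v \<in> {a, b}. dir v} = {b}" by auto
    then have "d = 1" unfolding d_def by simp
    then show ?thesis using \<open>\<not> dir a\<close> \<open>dir b\<close> unfolding val_def ch_def by simp real_asymp
  next
    assume "\<not> dir a" "\<not> dir b"
    then have "{v \<in> {a, b}. dir v} = {}" by auto
    then have "d = 0" unfolding d_def by simp
    then show ?thesis using \<open>\<not> dir a\<close> \<open>\<not> dir b\<close> unfolding val_def sh_def by simp real_asymp
  qed
  have lim2: "((\<lambda>\<tau>. complex_of_real (val \<tau> / (exp ((1 - real d) * ln \<tau> + \<tau> * pi) / 2))) \<longlongrightarrow> 1) at_top"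
    using tendsto_of_real[OF lim] unfolding of_real_1 .
  show ?case
    by (subst tendsto_cong[OF eq]) (rule lim2)
next
  case (split E u T dir DD DN)
  interpret sp: splitting E u T using split.hyps(1-6) by (rule splitting.intro)
  define s where "s = card (incident E u)"
  have s0: "complex_of_nat s \<noteq> 0" using sp.cardI unfolding s_def by simp
  have limD: "((\<lambda>\<tau>. DD e ((\<i> * of_real \<tau>)\<^sup>2) / of_real (F (T e) (dir(u := True)) \<tau>)) \<longlongrightarrow> 1) at_top"
    if "e \<in> incident E u" for e
    using bspec[OF split.IH that] by blast
  have limN: "((\<lambda>\<tau>. DN e ((\<i> * of_real \<tau>)\<^sup>2) / of_real (F (T e) (dir(u := False)) \<tau>)) \<longlongrightarrow> 1) at_top"
    if "e \<in> incident E u" for e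
    using bspec[OF split.IH that] by blast
  have ev: "\<forall>\<^sub>F \<tau> in at_top.
      (\<Sum>e\<in>incident E u. DN e ((\<i> * of_real \<tau>)\<^sup>2) * (\<Prod>f\<in>incident E u - {e}. DD f ((\<i> * of_real \<tau>)\<^sup>2)))
        / of_real (F E dir \<tau>)
    = (1 / of_nat s) * (\<Sum>e\<in>incident E u. (DN e ((\<i> * of_real \<tau>)\<^sup>2) / of_real (F (T e) (dir(u := False)) \<tau>))
          * (\<Prod>f\<in>incident E u - {e}. DD f ((\<i> * of_real \<tau>)\<^sup>2) / of_real (F (T f) (dir(u := True)) \<tau>)))"
    using eventually_gt_at_top[of 0]
  proof eventually_elim
    case (elim \<tau>)
    define l where "l = (\<i> * complex_of_real \<tau>)\<^sup>2"
    have FE: "complex_of_real (F E dir \<tau>) \<noteq> 0" using F_pos[OF sp.finE, of dir \<tau>] by simp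
    have per: "(DN e l / of_real (F (T e) (dir(u := False)) \<tau>))
          * (\<Prod>f\<in>incident E u - {e}. DD f l / of_real (F (T f) (dir(u := True)) \<tau>))
        = of_nat s * (DN e l * (\<Prod>f\<in>incident E u - {e}. DD f l)) / of_real (F E dir \<tau>)"
      if e: "e \<in> incident E u" for e
    proof -
      have "(\<Prod>f\<in>incident E u - {e}. DD f l / of_real (F (T f) (dir(u := True)) \<tau>))
          = (\<Prod>f\<in>incident E u - {e}. DD f l) / of_real (\<Prod>f\<in>incident E u - {e}. F (T f) (dir(u := True)) \<tau>)"
        by (simp add: prod_dividef)
      then have "(DN e l / of_real (F (T e) (dir(u := False)) \<tau>))
          * (\<Prod>f\<in>incident E u - {e}. DD f l / of_real (F (T f) (dir(u := True)) \<tau>))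
        = (DN e l * (\<Prod>f\<in>incident E u - {e}. DD f l)) /
          of_real (F (T e) (dir(u := False)) \<tau> * (\<Prod>f\<in>incident E u - {e}. F (T f) (dir(u := True)) \<tau>))"
        by simp
      also have "\<dots> = (DN e l * (\<Prod>f\<in>incident E u - {e}. DD f l)) / of_real (F E dir \<tau> / real s)"
        unfolding s_def using sp.F_identity[OF e elim] by simp
      also have "\<dots> = of_nat s * (DN e l * (\<Prod>f\<in>incident E u - {e}. DD f l)) / of_real (F E dir \<tau>)"
        using s0 FE by (simp add: field_simps)
      finally show ?thesis .
    qed
    have "(1 / of_nat s) * (\<Sum>e\<in>incident E u. (DN e l / of_real (F (T e) (dir(u := False)) \<tau>))
          * (\<Prod>f\<in>incident E u - {e}. DD f l / of_real (F (T f) (dir(u := True)) \<tau>)))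
        = (1 / of_nat s) * (\<Sum>e\<in>incident E u. of_nat s * (DN e l * (\<Prod>f\<in>incident E u - {e}. DD f l)) / of_real (F E dir \<tau>))"
      using per by simp
    also have "\<dots> = (\<Sum>e\<in>incident E u. DN e l * (\<Prod>f\<in>incident E u - {e}. DD f l)) / of_real (F E dir \<tau>)"
      using s0 by (simp add: sum_divide_distrib[symmetric] sum_distrib_left[symmetric])
    finally show ?case unfolding l_def by simp
  qed
  have lim: "((\<lambda>\<tau>. (1 / of_nat s) * (\<Sum>e\<in>incident E u. (DN e ((\<i> * of_real \<tau>)\<^sup>2) / of_real (F (T e) (dir(u := False)) \<tau>))
          * (\<Prod>f\<in>incident E u - {e}. DD f ((\<i> * of_real \<tau>)\<^sup>2) / of_real (F (T f) (dir(u := True)) \<tau>))))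
       \<longlongrightarrow> (1 / of_nat s) * (\<Sum>e\<in>incident E u. 1 * (\<Prod>f\<in>incident E u - {e}. 1))) at_top"
    by (intro tendsto_mult tendsto_const tendsto_sum tendsto_prod limN limD) auto
  have one: "(1 / complex_of_nat s) * (\<Sum>e\<in>incident E u. 1 * (\<Prod>f\<in>incident E u - {e}. 1)) = 1"
    using s0 unfolding s_def by simp
  show ?case
    by (subst tendsto_cong[OF ev]) (use lim one in simp)
qed


theorem lemma2:
  fixes E :: "('v \<times> 'v) set" and dir :: "'v \<Rightarrow> bool" and \<Delta>0 :: "complex \<Rightarrow> complex"
  assumes "is_tree E"
    and "char_fn E dir \<Delta>0"
  defines "m \<equiv> card E"
    and "d \<equiv> card {v \<in> verts E. degree E v = 1 \<and> dir v}"
  shows "((\<lambda>\<tau>::real. \<Delta>0 ((\<i> * of_real \<tau>)\<^sup>2) /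
            of_real (\<tau> powi (1 - int d) * (1 / 2 ^ m) * (\<Prod>v\<in>verts E. real (degree E v))
                     * exp (real m * \<tau> * pi)))
          \<longlongrightarrow> 1) at_top"
proof -
  have eq: "\<forall>\<^sub>F \<tau> in at_top. \<Delta>0 ((\<i> * of_real \<tau>)\<^sup>2) /
            of_real (\<tau> powi (1 - int d) * (1 / 2 ^ m) * (\<Prod>v\<in>verts E. real (degree E v))
                     * exp (real m * \<tau> * pi))
       = \<Delta>0 ((\<i> * of_real \<tau>)\<^sup>2) / of_real (F E dir \<tau>)"
    using eventually_gt_at_top[of 0]
  proof eventually_elim
    case (elim \<tau>)
    have "exp ((1 - real d) * ln \<tau>) = \<tau> powr (1 - real d)" using elim by (simp add: powr_def)
    also have "\<dots> = \<tau> powr real_of_int (1 - int d)" by simp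
    also have "\<dots> = \<tau> powi (1 - int d)" using elim by (intro powr_real_of_int') auto
    finally have p: "exp ((1 - real d) * ln \<tau>) = \<tau> powi (1 - int d)" .
    have "F E dir \<tau> = \<tau> powi (1 - int d) * (1 / 2 ^ m) * (\<Prod>v\<in>verts E. real (degree E v))
                     * exp (real m * \<tau> * pi)"
      unfolding F_def Pd_def Dset_def d_def[symmetric] m_def[symmetric] exp_add p by simp
    then show ?case by simp
  qed
  show ?thesis
    by (subst tendsto_cong[OF eq]) (rule main[OF assms(2)])
qed

end
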